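(* Let Assumptions (H), (R) and (F) hold, let $X$ be a local diffusion generated by $\mathcal A_t$ on $D$, and let $\Gamma$ be its local transition density on $D$ (a non-negative measurable function $\Gamma(t,x;T,y)$, $0<t<T<T_0$, $x\in\mathbb R^d$, $y\in D$, with $p(t,x;T,A)=\int_A\Gamma(t,x;T,y)dy$ for Borel $A\subseteq D$, continuous in $y\in D$ and bounded on compact subsets of $D$ uniformly in $x\in\mathbb R^d$). Then for all $0<t<T<T_0$ and $\xi\in D$, the function $x\mapsto\Gamma(t,x;T,\xi)$ is bounded and Borel measurable on $\mathbb R^d$, and $$\Gamma(t,x;T,\xi)=E_{t,x}\big[\Gamma(s,X_s;T,\xi)\big],\qquad t<s<T,\ x\in\mathbb R^d.$$
   Context: Fix $T_0>0$, integers $1\le p_0\le d$, a real $d\times d$ matrix $B$, $Y:=\langle Bx,\nabla_x\rangle+\partial_t$. Assumption (H): $\mathrm{rank}\,\mathrm{Lie}(\partial_{x_1},\dots,\partial_{x_{p_0}},Y)=d$. Intrinsic Hölder spaces $C^{n,\alpha}_B(Q)$ for a domain $Q\subseteq\mathbb R^{1+d}$: with $e^{\delta\partial_{x_i}}(t,x)=(t,x+\delta e_i)$, $e^{\delta Y}(t,x)=(t+\delta,e^{\delta B}x)$, $\delta_{(t,x)}$ the sup of $\bar\delta\in]0,1]$ with these points in $Q$ for $|\delta|\le\bar\delta$, $\delta_V=\inf_V\delta_{(t,x)}$; $f\in C^{\alpha_1}_{\partial_{x_i}}(Q)$ (resp. $C^{\alpha_2}_Y(Q)$) if $\sup_{V,0<|\delta|<\delta_V}|f(e^{\delta\partial_{x_i}}(t,x))-f(t,x)|/|\delta|^{\alpha_1}$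 (resp. $|f(e^{\delta Y}(t,x))-f(t,x)|/|\delta|^{\alpha_2/2}$) is finite for every $V\Subset Q$. $C^{0,\alpha}_B=C^\alpha_Y\cap\bigcap_{i\le p_0}C^\alpha_{\partial_{x_i}}$; $C^{1,\alpha}_B$: $f\in C^{1+\alpha}_Y$, $\partial_{x_i}f\in C^{0,\alpha}_B$; $n\ge2$: Lie derivative $Yf$ exists in $C^{n-2,\alpha}_B$ and $\partial_{x_i}f\in C^{n-1,\alpha}_B$ ($i\le p_0$). Markov setting. $X=(X_s)_{s\in[0,T_0[}$ is a continuous strong Markov process on $(\Omega,\mathcal F,(\mathcal F^t_T),(P_{t,x}))$ with transition probability $p(t,x;T,d\xi)$; $E_{t,x}$ is $P_{t,x}$-expectation. $\lim_{T-t\to0^+}$ means the common value of $\lim_{h\to0^+}f(t,t+h)$ and $\lim_{h\to0^+}f(t-h,t)$. $D$ is a domain, $a_{ij}=a_{ji},a_i\in L^\infty_{loc}([0,T_0[\times D)$, $\mathcal A_t=\frac12\sum_{i,j\le p_0}a_{ij}\partial_{x_ix_j}+\sum_{i\le p_0}a_i\partial_{x_i}+\langle Bx,\nabla_x\rangle$. $X$ is a local diffusion generated by $\mathcal A_t$ on $D$ if for all $t\in[0,T_0[$, $\delta>0$, compact $H\subset D$: [Lim-i] $\frac1{T-t}p(t,x;T,\{|\xi-x|>\delta\}\cap H)\to0$ uniformly in $x\in\mathbb R^d$ and $\frac1{T-t}p(t,x;T,\{|\xi-x|>\delta\})\to0$ uniformly in $x\in H$; [Lim-ii] uniformly in $x\in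 H$, $\frac1{T-t}\int_{|\xi-x|<\delta}(\xi-x)_ip(t,x;T,d\xi)\to a_i(t,x)+(Bx)_i$ ($i\le p_0$), $\to(Bx)_i$ ($i>p_0$); $\frac1{T-t}\int_{|\xi-x|<\delta}(\xi-x)_i(\xi-x)_jp(t,x;T,d\xi)\to a_{ij}(t,x)$ ($i,j\le p_0$), $\to0$ otherwise. Assumption (R): there are $N\in\mathbb N_0$, $\alpha\in]0,1]$, $M>0$ with $a_{ij},a_i\in C^{N,\alpha}_B(]0,T_0[\times D)$, all Lie derivatives bounded by $M$, and $M^{-1}|\xi|^2\le\sum_{i,j\le p_0}a_{ij}(t,x)\xi_i\xi_j\le M|\xi|^2$ on $]0,T_0[\times D$. Assumption (F): for every $T\in]0,T_0[$ and every bounded continuous $\varphi$ on $\mathbb R^d$, $(t,x)\mapsto E_{t,x}[\varphi(X_T)]$ is continuous on $]0,T[\times D$. *)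

theory Defs
  imports "HOL-Analysis.Analysis" "HOL-Probability.Probability"
begin

text \<open>Points of R^(1+d) are pairs (t, x) with t real and x in R^d = real^'d.
  The diffusive coordinates x_1..x_p0 are represented by a nonempty index set P.\<close>

type_synonym ('d) st = "real \<times> (real^'d::finite)"

definition lie_bracket :: "(('d::finite) st \<Rightarrow> ('d::finite) st) \<Rightarrow> (('d::finite) st \<Rightarrow> ('d::finite) st) \<Rightarrow> (('d::finite) st \<Rightarrow> ('d::finite) st)" where
  "lie_bracket V W = (\<lambda>z. frechet_derivative W (at z) (V z) - frechet_derivative V (at z) (W z))"

inductive_set lie_alg :: "(('d::finite) st \<Rightarrow> ('d::finite) st) set \<Rightarrow> (('d::finite) st \<Rightarrow> ('d::finite) st) set" for G where
  gen: "V \<in> G \<Longrightarrow> V \<in> lie_alg G"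
| add: "V \<in> lie_alg G \<Longrightarrow> W \<in> lie_alg G \<Longrightarrow> (\<lambda>z. V z + W z) \<in> lie_alg G"
| smul: "V \<in> lie_alg G \<Longrightarrow> (\<lambda>z. c *\<^sub>R V z) \<in> lie_alg G"
| brk: "V \<in> lie_alg G \<Longrightarrow> W \<in> lie_alg G \<Longrightarrow> lie_bracket V W \<in> lie_alg G"

definition dx_field :: "'d \<Rightarrow> ('d::finite) st \<Rightarrow> ('d::finite) st" where
  "dx_field i = (\<lambda>z. (0, axis i 1))"

definition Y_field :: "real^'d^'d \<Rightarrow> ('d::finite) st \<Rightarrow> ('d::finite) st" where
  "Y_field B = (\<lambda>(t, x). (1, B *v x))"

definition hoermander_H :: "'d set \<Rightarrow> real^'d^'d \<Rightarrow> bool" where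
  "hoermander_H P B \<longleftrightarrow>
     (\<forall>z. dim {V z | V. V \<in> lie_alg (insert (Y_field B) (dx_field ` P))} = DIM(('d::finite) st))"

definition mexp :: "real^'d^'d \<Rightarrow> real \<Rightarrow> real^'d \<Rightarrow> real^'d" where
  "mexp B \<delta> x = (\<Sum>k. (\<delta> ^ k / fact k) *\<^sub>R (((*v) B ^^ k) x))"

definition expX :: "'d \<Rightarrow> real \<Rightarrow> ('d::finite) st \<Rightarrow> ('d::finite) st" where
  "expX i \<delta> = (\<lambda>(t, x). (t, x + \<delta> *\<^sub>R axis i 1))"

definition expY :: "real^'d^'d \<Rightarrow> real \<Rightarrow> ('d::finite) st \<Rightarrow> ('d::finite) st" where
  "expY B \<delta> = (\<lambda>(t, x). (t + \<delta>, mexp B \<delta> x))"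

definition delta_pt :: "'d set \<Rightarrow> real^'d^'d \<Rightarrow> ('d::finite) st set \<Rightarrow> ('d::finite) st \<Rightarrow> real" where
  "delta_pt P B Q z = Sup {db. 0 < db \<and> db \<le> 1 \<and>
      (\<forall>\<delta>. \<bar>\<delta>\<bar> \<le> db \<longrightarrow> (\<forall>i\<in>P. expX i \<delta> z \<in> Q) \<and> expY B \<delta> z \<in> Q)}"

definition delta_set :: "'d set \<Rightarrow> real^'d^'d \<Rightarrow> ('d::finite) st set \<Rightarrow> ('d::finite) st set \<Rightarrow> real" where
  "delta_set P B Q V = Inf (delta_pt P B Q ` V)"

definition cpt_sub :: "'a::metric_space set \<Rightarrow> 'a set \<Rightarrow> bool" where
  "cpt_sub V Q \<longleftrightarrow> bounded V \<and> closure V \<subseteq> Q"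

definition holderX :: "'d set \<Rightarrow> real^'d^'d \<Rightarrow> ('d::finite) st set \<Rightarrow> real \<Rightarrow> 'd \<Rightarrow> (('d::finite) st \<Rightarrow> real) \<Rightarrow> bool" where
  "holderX P B Q a i f \<longleftrightarrow> (\<forall>V. cpt_sub V Q \<longrightarrow> (\<exists>C. \<forall>z\<in>V. \<forall>\<delta>.
      0 < \<bar>\<delta>\<bar> \<and> \<bar>\<delta>\<bar> < delta_set P B Q V \<longrightarrow>
      \<bar>f (expX i \<delta> z) - f z\<bar> / \<bar>\<delta>\<bar> powr a \<le> C))"

definition holderY :: "'d set \<Rightarrow> real^'d^'d \<Rightarrow> ('d::finite) st set \<Rightarrow> real \<Rightarrow> (('d::finite) st \<Rightarrow> real) \<Rightarrow> bool" where
  "holderY P B Q a f \<longleftrightarrow> (\<forall>V. cpt_sub V Q \<longrightarrow> (\<exists>C. \<forall>z\<in>V. \<forall>\<delta>.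
      0 < \<bar>\<delta>\<bar> \<and> \<bar>\<delta>\<bar> < delta_set P B Q V \<longrightarrow>
      \<bar>f (expY B \<delta> z) - f z\<bar> / \<bar>\<delta>\<bar> powr (a / 2) \<le> C))"

definition pdx_ex :: "'d \<Rightarrow> (('d::finite) st \<Rightarrow> real) \<Rightarrow> ('d::finite) st \<Rightarrow> bool" where
  "pdx_ex i f z \<longleftrightarrow> (\<lambda>h. f (expX i h z)) differentiable (at 0)"

definition pdx :: "'d \<Rightarrow> (('d::finite) st \<Rightarrow> real) \<Rightarrow> ('d::finite) st \<Rightarrow> real" where
  "pdx i f z = deriv (\<lambda>h. f (expX i h z)) 0"

definition lieY_ex :: "real^'d^'d \<Rightarrow> (('d::finite) st \<Rightarrow> real) \<Rightarrow> ('d::finite) st \<Rightarrow> bool" where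
  "lieY_ex B f z \<longleftrightarrow> (\<lambda>h. f (expY B h z)) differentiable (at 0)"

definition lieY :: "real^'d^'d \<Rightarrow> (('d::finite) st \<Rightarrow> real) \<Rightarrow> ('d::finite) st \<Rightarrow> real" where
  "lieY B f z = deriv (\<lambda>h. f (expY B h z)) 0"

fun CB :: "'d set \<Rightarrow> real^'d^'d \<Rightarrow> ('d::finite) st set \<Rightarrow> real \<Rightarrow> nat \<Rightarrow> (('d::finite) st \<Rightarrow> real) set" where
  "CB P B Q a 0 = {f. holderY P B Q a f \<and> (\<forall>i\<in>P. holderX P B Q a i f)}"
| "CB P B Q a (Suc 0) = {f. holderY P B Q (1 + a) f \<and>
      (\<forall>i\<in>P. (\<forall>z\<in>Q. pdx_ex i f z) \<and> pdx i f \<in> CB P B Q a 0)}"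
| "CB P B Q a (Suc (Suc n)) = {f. (\<forall>z\<in>Q. lieY_ex B f z) \<and> lieY B f \<in> CB P B Q a n \<and>
      (\<forall>i\<in>P. (\<forall>z\<in>Q. pdx_ex i f z) \<and> pdx i f \<in> CB P B Q a (Suc n))}"

fun lie_derivs :: "'d set \<Rightarrow> real^'d^'d \<Rightarrow> nat \<Rightarrow> (('d::finite) st \<Rightarrow> real) \<Rightarrow> (('d::finite) st \<Rightarrow> real) set" where
  "lie_derivs P B 0 f = {f}"
| "lie_derivs P B (Suc 0) f = {f} \<union> (\<lambda>i. pdx i f) ` P"
| "lie_derivs P B (Suc (Suc n)) f = {f} \<union> lie_derivs P B n (lieY B f) \<union>
      (\<Union>i\<in>P. lie_derivs P B (Suc n) (pdx i f))"

definition assumption_R :: "real \<Rightarrow> 'd set \<Rightarrow> real^'d^'d \<Rightarrow> (real^'d) set \<Rightarrow>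
    ('d \<Rightarrow> 'd \<Rightarrow> ('d::finite) st \<Rightarrow> real) \<Rightarrow> ('d \<Rightarrow> ('d::finite) st \<Rightarrow> real) \<Rightarrow> nat \<Rightarrow> real \<Rightarrow> real \<Rightarrow> bool" where
  "assumption_R T0 P B D a b N \<alpha> M \<longleftrightarrow>
     0 < \<alpha> \<and> \<alpha> \<le> 1 \<and> 0 < M \<and>
     (let Q = {0<..<T0} \<times> D in
       (\<forall>i\<in>P. \<forall>j\<in>P. a i j \<in> CB P B Q \<alpha> N \<and> (\<forall>g\<in>lie_derivs P B N (a i j). \<forall>z\<in>Q. \<bar>g z\<bar> \<le> M)) \<and>
       (\<forall>i\<in>P. b i \<in> CB P B Q \<alpha> N \<and> (\<forall>g\<in>lie_derivs P B N (b i). \<forall>z\<in>Q. \<bar>g z\<bar> \<le> M)) \<and>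
       (\<forall>z\<in>Q. \<forall>\<xi>::'d \<Rightarrow> real.
          inverse M * (\<Sum>i\<in>P. (\<xi> i)\<^sup>2) \<le> (\<Sum>i\<in>P. \<Sum>j\<in>P. a i j z * \<xi> i * \<xi> j) \<and>
          (\<Sum>i\<in>P. \<Sum>j\<in>P. a i j z * \<xi> i * \<xi> j) \<le> M * (\<Sum>i\<in>P. (\<xi> i)\<^sup>2)))"

definition trans_prob :: "(real \<Rightarrow> real^'d \<Rightarrow> 'w measure) \<Rightarrow> (real \<Rightarrow> 'w \<Rightarrow> real^'d) \<Rightarrow>
    real \<Rightarrow> real^'d \<Rightarrow> real \<Rightarrow> (real^'d) set \<Rightarrow> real" where
  "trans_prob Pm X t x T A = measure (Pm t x) {\<omega> \<in> space (Pm t x). X T \<omega> \<in> A}"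

definition is_stopping_time :: "real \<Rightarrow> 'w measure \<Rightarrow> (real \<Rightarrow> real \<Rightarrow> 'w measure) \<Rightarrow> real \<Rightarrow> ('w \<Rightarrow> real) \<Rightarrow> bool" where
  "is_stopping_time T0 M Fl t \<tau> \<longleftrightarrow>
     (\<forall>\<omega>\<in>space M. t \<le> \<tau> \<omega> \<and> \<tau> \<omega> < T0) \<and>
     (\<forall>s\<in>{t..<T0}. {\<omega> \<in> space M. \<tau> \<omega> \<le> s} \<in> sets (Fl t s))"

definition stopped_sets :: "real \<Rightarrow> 'w measure \<Rightarrow> (real \<Rightarrow> real \<Rightarrow> 'w measure) \<Rightarrow> real \<Rightarrow> ('w \<Rightarrow> real) \<Rightarrow> 'w set set" where
  "stopped_sets T0 M Fl t \<tau> = {A \<in> sets M. \<forall>s\<in>{t..<T0}. A \<inter> {\<omega> \<in> space M. \<tau> \<omega> \<le> s} \<in> sets (Fl t s)}"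

text \<open>X = (X_s)_{s in [0,T0[} is a continuous strong Markov process on
  (Omega = space M, F = sets M, (F^t_T) = Fl t T, (P_{t,x}) = Pm t x).\<close>
definition cont_strong_markov :: "real \<Rightarrow> 'w measure \<Rightarrow> (real \<Rightarrow> real \<Rightarrow> 'w measure) \<Rightarrow>
    (real \<Rightarrow> real^'d \<Rightarrow> 'w measure) \<Rightarrow> (real \<Rightarrow> 'w \<Rightarrow> real^'d) \<Rightarrow> bool" where
  "cont_strong_markov T0 M Fl Pm X \<longleftrightarrow>
     (\<forall>t\<in>{0..<T0}. \<forall>x. prob_space (Pm t x) \<and> sets (Pm t x) = sets M) \<and>
     (\<forall>t s. 0 \<le> t \<longrightarrow> t \<le> s \<longrightarrow> s < T0 \<longrightarrow> subalgebra M (Fl t s)) \<and>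
     (\<forall>t s r. 0 \<le> t \<longrightarrow> t \<le> s \<longrightarrow> s \<le> r \<longrightarrow> r < T0 \<longrightarrow> sets (Fl t s) \<subseteq> sets (Fl t r)) \<and>
     (\<forall>t s. 0 \<le> t \<longrightarrow> t \<le> s \<longrightarrow> s < T0 \<longrightarrow> X s \<in> measurable (Fl t s) borel) \<and>
     (\<forall>\<omega>\<in>space M. continuous_on {0..<T0} (\<lambda>s. X s \<omega>)) \<and>
     (\<forall>t\<in>{0..<T0}. \<forall>x. AE \<omega> in Pm t x. X t \<omega> = x) \<and>
     (\<forall>t\<in>{0..<T0}. \<forall>T\<in>{t..<T0}. \<forall>A\<in>sets borel.
        (\<lambda>x. trans_prob Pm X t x T A) \<in> borel_measurable borel) \<and>
     (\<forall>t\<in>{0..<T0}. \<forall>x \<tau>. is_stopping_time T0 M Fl t \<tau> \<longrightarrow>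
        (\<forall>T\<in>{t..<T0}. \<forall>A\<in>sets borel. \<forall>C\<in>stopped_sets T0 M Fl t \<tau>.
          measure (Pm t x) (C \<inter> {\<omega> \<in> space M. \<tau> \<omega> \<le> T \<and> X T \<omega> \<in> A}) =
          (\<integral>\<omega>\<in>C \<inter> {\<omega> \<in> space M. \<tau> \<omega> \<le> T}. trans_prob Pm X (\<tau> \<omega>) (X (\<tau> \<omega>) \<omega>) T A \<partial>(Pm t x))))"

text \<open>lim_{T-t -> 0+} F(t,T,x) = L(x) uniformly in x in S: both the limit h->0+ of F(t,t+h,x)
  and (when t > 0, so that t-h is an admissible time) of F(t-h,t,x).\<close>
definition tlim :: "real \<Rightarrow> 'a set \<Rightarrow> (real \<Rightarrow> real \<Rightarrow> 'a \<Rightarrow> real) \<Rightarrow> ('a \<Rightarrow> real) \<Rightarrow> bool" where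
  "tlim t S F L \<longleftrightarrow> uniform_limit S (\<lambda>h x. F t (t + h) x) L (at_right 0) \<and>
      (0 < t \<longrightarrow> uniform_limit S (\<lambda>h x. F (t - h) t x) L (at_right 0))"

definition Linf_loc :: "'a::topological_space set \<Rightarrow> ('a \<Rightarrow> real) \<Rightarrow> bool" where
  "Linf_loc S f \<longleftrightarrow> f \<in> borel_measurable (restrict_space borel S) \<and>
      (\<forall>K. compact K \<longrightarrow> K \<subseteq> S \<longrightarrow> bounded (f ` K))"

text \<open>X is a local diffusion generated by A_t = 1/2 sum a_ij d_ij + sum b_i d_i + <Bx,grad> on D
  (a = (a_ij), b = (a_i) the drift; only indices in P are relevant).\<close>
definition local_diffusion :: "real \<Rightarrow> (real \<Rightarrow> real^'d \<Rightarrow> 'w measure) \<Rightarrow> (real \<Rightarrow> 'w \<Rightarrow> real^'d) \<Rightarrow>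
    'd set \<Rightarrow> real^'d^'d \<Rightarrow> (real^'d) set \<Rightarrow> ('d \<Rightarrow> 'd \<Rightarrow> ('d::finite) st \<Rightarrow> real) \<Rightarrow> ('d \<Rightarrow> ('d::finite) st \<Rightarrow> real) \<Rightarrow> bool" where
  "local_diffusion T0 Pm X P B D a b \<longleftrightarrow>
     (\<forall>i\<in>P. \<forall>j\<in>P. a i j = a j i) \<and>
     (\<forall>i\<in>P. \<forall>j\<in>P. Linf_loc ({0..<T0} \<times> D) (a i j)) \<and>
     (\<forall>i\<in>P. Linf_loc ({0..<T0} \<times> D) (b i)) \<and>
     (\<forall>t\<in>{0..<T0}. \<forall>\<delta>>0. \<forall>H. compact H \<and> H \<subseteq> D \<longrightarrow>
        tlim t UNIV (\<lambda>s T x. trans_prob Pm X s x T ({\<xi>. norm (\<xi> - x) > \<delta>} \<inter> H) / (T - s)) (\<lambda>x. 0) \<and>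
        tlim t H (\<lambda>s T x. trans_prob Pm X s x T {\<xi>. norm (\<xi> - x) > \<delta>} / (T - s)) (\<lambda>x. 0) \<and>
        (\<forall>i. tlim t H
           (\<lambda>s T x. (\<integral>\<omega>. indicator {\<xi>. norm (\<xi> - x) < \<delta>} (X T \<omega>) * (X T \<omega> - x) $ i \<partial>(Pm s x)) / (T - s))
           (\<lambda>x. (if i \<in> P then b i (t, x) else 0) + (B *v x) $ i)) \<and>
        (\<forall>i j. tlim t H
           (\<lambda>s T x. (\<integral>\<omega>. indicator {\<xi>. norm (\<xi> - x) < \<delta>} (X T \<omega>) *
                 (X T \<omega> - x) $ i * (X T \<omega> - x) $ j \<partial>(Pm s x)) / (T - s))
           (\<lambda>x. if i \<in> P \<and> j \<in> P then a i j (t, x) else 0)))"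

definition assumption_F :: "real \<Rightarrow> (real \<Rightarrow> real^'d \<Rightarrow> 'w measure) \<Rightarrow> (real \<Rightarrow> 'w \<Rightarrow> real^'d) \<Rightarrow> (real^'d) set \<Rightarrow> bool" where
  "assumption_F T0 Pm X D \<longleftrightarrow>
     (\<forall>T\<in>{0<..<T0}. \<forall>\<phi>::real^'d \<Rightarrow> real. continuous_on UNIV \<phi> \<and> bounded (range \<phi>) \<longrightarrow>
        continuous_on ({0<..<T} \<times> D) (\<lambda>(t, x). \<integral>\<omega>. \<phi> (X T \<omega>) \<partial>(Pm t x)))"

definition local_density :: "real \<Rightarrow> (real \<Rightarrow> real^'d \<Rightarrow> 'w measure) \<Rightarrow> (real \<Rightarrow> 'w \<Rightarrow> real^'d) \<Rightarrow> (real^'d) set \<Rightarrow>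
    (real \<Rightarrow> real^'d \<Rightarrow> real \<Rightarrow> real^'d \<Rightarrow> real) \<Rightarrow> bool" where
  "local_density T0 Pm X D \<Gamma> \<longleftrightarrow>
     (\<forall>t T. 0 < t \<longrightarrow> t < T \<longrightarrow> T < T0 \<longrightarrow>
        (\<forall>x y. y \<in> D \<longrightarrow> 0 \<le> \<Gamma> t x T y) \<and>
        (\<forall>x. \<Gamma> t x T \<in> borel_measurable (restrict_space borel D)) \<and>
        (\<forall>x. \<forall>A\<in>sets borel. A \<subseteq> D \<longrightarrow>
           ennreal (trans_prob Pm X t x T A) = (\<integral>\<^sup>+ y\<in>A. ennreal (\<Gamma> t x T y) \<partial>lborel)) \<and>
        (\<forall>x. continuous_on D (\<Gamma> t x T)) \<and>
        (\<forall>K. compact K \<longrightarrow> K \<subseteq> D \<longrightarrow> (\<exists>C. \<forall>x. \<forall>y\<in>K. \<Gamma> t x T y \<le> C)))"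

end

theory Submission imports Defs begin

lemma ball_integral:
  fixes f :: "real^'d::finite \<Rightarrow> real" and pr :: "(real^'d) set \<Rightarrow> real"
  assumes meas: "f \<in> borel_measurable (restrict_space borel D)"
    and Dm: "D \<in> sets borel"
    and nn: "\<forall>y\<in>D. 0 \<le> f y"
    and pr: "\<forall>A\<in>sets borel. A \<subseteq> D \<longrightarrow> ennreal (pr A) = (\<integral>\<^sup>+ y\<in>A. ennreal (f y) \<partial>lborel)"
    and prn: "0 \<le> pr (ball \<xi> r)"
    and sub: "cball \<xi> e \<subseteq> D" and C: "\<forall>y\<in>cball \<xi> e. f y \<le> C" and r: "r \<le> e"
  shows "pr (ball \<xi> r) = integral\<^sup>L lborel (\<lambda>y. indicator (ball \<xi> r) y * f y)"
    and "integrable lborel (\<lambda>y. indicator (ball \<xi> r) y * f y)"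
proof -
  let ?B = "ball \<xi> r"
  have BD: "?B \<subseteq> D" using sub r by auto
  have m1: "(\<lambda>x. indicator D x *\<^sub>R f x) \<in> borel_measurable borel"
    using meas Dm by (subst (asm) borel_measurable_restrict_space_iff) auto
  have eq: "(\<lambda>y. indicator ?B y * f y) = (\<lambda>y. indicator ?B y * (indicator D y *\<^sub>R f y))"
    using BD by (auto simp: indicator_def fun_eq_iff)
  have m2: "(\<lambda>y. indicator ?B y * f y) \<in> borel_measurable borel"
    unfolding eq by (intro borel_measurable_times borel_measurable_indicator m1) auto
  have mf: "(\<lambda>y. indicator D y *\<^sub>R f y) \<in> borel_measurable lborel" using m1 by simp
  have int: "integrable lborel (\<lambda>y. indicator ?B y *\<^sub>R (indicator D y *\<^sub>R f y))"
  proof (rule integrableI_bounded_set_indicator[where B=C])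
    show "emeasure lborel ?B < \<infinity>" by (rule emeasure_bounded_finite) auto
    show "AE x in lborel. x \<in> ?B \<longrightarrow> norm (indicator D x *\<^sub>R f x) \<le> C"
      using BD nn C sub r by (intro AE_I2) (auto simp: indicator_def subset_iff)
  qed (use mf in auto)
  then show int2: "integrable lborel (\<lambda>y. indicator ?B y * f y)" using eq by simp
  have "ennreal (pr ?B) = (\<integral>\<^sup>+ y\<in>?B. ennreal (f y) \<partial>lborel)" using pr BD by auto
  also have "\<dots> = (\<integral>\<^sup>+ y. ennreal (indicator ?B y * f y) \<partial>lborel)"
    by (rule nn_integral_cong) (auto simp: indicator_def)
  also have "\<dots> = ennreal (integral\<^sup>L lborel (\<lambda>y. indicator ?B y * f y))"
    by (rule nn_integral_eq_integral[OF int2]) (use BD nn in \<open>auto intro!: AE_I2 simp: indicator_def subset_iff\<close>)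
  finally have e1: "ennreal (pr ?B) = ennreal (integral\<^sup>L lborel (\<lambda>y. indicator ?B y * f y))" .
  have "0 \<le> integral\<^sup>L lborel (\<lambda>y. indicator ?B y * f y)"
    by (rule integral_nonneg_AE) (use BD nn in \<open>auto intro!: AE_I2 simp: indicator_def subset_iff\<close>)
  with e1 prn show "pr ?B = integral\<^sup>L lborel (\<lambda>y. indicator ?B y * f y)"
    by (simp add: ennreal_inj)
qed

lemma dens_lim:
  fixes f :: "real^'d::finite \<Rightarrow> real" and pr :: "(real^'d) set \<Rightarrow> real"
  assumes D: "open D" and xi: "\<xi> \<in> D" and cont: "continuous_on D f"
    and meas: "f \<in> borel_measurable (restrict_space borel D)"
    and nn: "\<forall>y\<in>D. 0 \<le> f y"
    and pr: "\<forall>A\<in>sets borel. A \<subseteq> D \<longrightarrow> ennreal (pr A) = (\<integral>\<^sup>+ y\<in>A. ennreal (f y) \<partial>lborel)"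
    and prn: "\<forall>A. 0 \<le> pr A"
    and e: "0 < e" and sub: "cball \<xi> e \<subseteq> D" and C: "\<forall>y\<in>cball \<xi> e. f y \<le> C"
  shows "(\<lambda>n. pr (ball \<xi> (e / Suc n)) / measure lborel (ball \<xi> (e / Suc n))) \<longlonglongrightarrow> f \<xi>"
    and "0 \<le> pr (ball \<xi> (e / Suc n)) / measure lborel (ball \<xi> (e / Suc n))"
    and "pr (ball \<xi> (e / Suc n)) / measure lborel (ball \<xi> (e / Suc n)) \<le> C"
proof -
  have Dm: "D \<in> sets borel" using D by auto
  have fin: "\<And>r. emeasure lborel (ball \<xi> r) < \<infinity>" by (rule emeasure_bounded_finite) auto
  have ii: "\<And>r. integrable lborel (indicator (ball \<xi> r) :: _ \<Rightarrow> real)"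
    using fin by (intro integrable_real_indicator) auto
  have key: "\<And>r. 0 < r \<Longrightarrow> r \<le> e \<Longrightarrow> pr (ball \<xi> r) = integral\<^sup>L lborel (\<lambda>y. indicator (ball \<xi> r) y * f y)
     \<and> integrable lborel (\<lambda>y. indicator (ball \<xi> r) y * f y)"
    using ball_integral[OF meas Dm nn pr _ sub C] prn by blast
  have rle: "e / Suc n \<le> e" "0 < e / Suc n" for n
    using e by (auto simp: field_simps)
  have cpos: "0 < measure lborel (ball \<xi> (e / Suc n))" for n using rle by simp
  {
    fix n
    let ?B = "ball \<xi> (e / Suc n)"
    have BD: "?B \<subseteq> cball \<xi> e" using rle(1)[of n] by auto
    from key[OF rle(2) rle(1)] have k: "pr ?B = integral\<^sup>L lborel (\<lambda>y. indicator ?B y * f y)"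
      "integrable lborel (\<lambda>y. indicator ?B y * f y)" by auto
    have "pr ?B \<le> integral\<^sup>L lborel (\<lambda>y. C * indicator ?B y)"
      unfolding k(1) proof (rule integral_mono)
      show "integrable lborel (\<lambda>y. C * indicator ?B y)" using ii[of "e / Suc n"] by auto
      fix y show "indicator ?B y * f y \<le> C * indicator ?B y"
        using BD C by (auto simp: indicator_def subset_iff)
    qed (use k(2) in auto)
    also have "\<dots> = C * measure lborel ?B" by simp
    finally have "pr ?B \<le> C * measure lborel ?B" .
    then show "pr ?B / measure lborel ?B \<le> C" using cpos[of n] by (simp add: divide_le_eq)
    show "0 \<le> pr ?B / measure lborel ?B" using prn cpos[of n] by simp
  }
  show "(\<lambda>n. pr (ball \<xi> (e / Suc n)) / measure lborel (ball \<xi> (e / Suc n))) \<longlonglongrightarrow> f \<xi>"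
  proof (rule LIMSEQ_I)
    fix \<epsilon> :: real assume \<epsilon>: "0 < \<epsilon>"
    have "isCont f \<xi>" using cont D xi by (simp add: continuous_on_eq_continuous_at)
    then have "\<exists>\<delta>>0. \<forall>y. dist y \<xi> < \<delta> \<longrightarrow> dist (f y) (f \<xi>) < \<epsilon>/2"
      unfolding continuous_at_eps_delta using \<epsilon> half_gt_zero[OF \<epsilon>] by blast
    then obtain \<delta> where \<delta>: "\<delta> > 0" "\<And>y. dist y \<xi> < \<delta> \<Longrightarrow> dist (f y) (f \<xi>) < \<epsilon>/2"
      by blast
    obtain n0 :: nat where n0: "e / \<delta> < n0" using reals_Archimedean2 by blast
    show "\<exists>no. \<forall>n\<ge>no. norm (pr (ball \<xi> (e / Suc n)) / measure lborel (ball \<xi> (e / Suc n)) - f \<xi>) < \<epsilon>"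
    proof (intro exI allI impI)
      fix n assume "n0 \<le> n"
      let ?B = "ball \<xi> (e / Suc n)"
      have "e / \<delta> < Suc n" using n0 \<open>n0 \<le> n\<close> by linarith
      hence small: "e / Suc n < \<delta>" using \<delta> e by (simp add: field_simps)
      from key[OF rle(2) rle(1)] have k: "pr ?B = integral\<^sup>L lborel (\<lambda>y. indicator ?B y * f y)"
        "integrable lborel (\<lambda>y. indicator ?B y * f y)" by auto
      have eq: "pr ?B - f \<xi> * measure lborel ?B = integral\<^sup>L lborel (\<lambda>y. indicator ?B y * f y - f \<xi> * indicator ?B y)"
      proof -
        have i1: "integrable lborel (\<lambda>y. f \<xi> * indicator ?B y)" using ii[of "e / Suc n"] by auto
        have "integral\<^sup>L lborel (\<lambda>y. indicator ?B y * f y - f \<xi> * indicator ?B y)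
           = integral\<^sup>L lborel (\<lambda>y. indicator ?B y * f y) - integral\<^sup>L lborel (\<lambda>y. f \<xi> * indicator ?B y)"
          by (rule Bochner_Integration.integral_diff[OF k(2) i1])
        also have "integral\<^sup>L lborel (\<lambda>y. f \<xi> * indicator ?B y) = f \<xi> * measure lborel ?B"
          by simp
        finally show ?thesis using k(1) by simp
      qed
      have "\<bar>pr ?B - f \<xi> * measure lborel ?B\<bar> \<le> integral\<^sup>L lborel (\<lambda>y. norm (indicator ?B y * f y - f \<xi> * indicator ?B y))"
      proof -
        have "norm (integral\<^sup>L lborel (\<lambda>y. indicator ?B y * f y - f \<xi> * indicator ?B y))
            \<le> integral\<^sup>L lborel (\<lambda>y. norm (indicator ?B y * f y - f \<xi> * indicator ?B y))"
          by (rule integral_norm_bound)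
        then show ?thesis unfolding eq real_norm_def .
      qed
      also have "\<dots> \<le> integral\<^sup>L lborel (\<lambda>y. \<epsilon>/2 * indicator ?B y)"
      proof (rule integral_mono)
        show "integrable lborel (\<lambda>y. norm (indicator ?B y * f y - f \<xi> * indicator ?B y))"
          using k ii by auto
        show "integrable lborel (\<lambda>y. \<epsilon>/2 * indicator ?B y)" using ii by auto
        fix y
        show "norm (indicator ?B y * f y - f \<xi> * indicator ?B y) \<le> \<epsilon>/2 * indicator ?B y"
        proof (cases "y \<in> ?B")
          case True
          then have "dist y \<xi> < \<delta>" using small by (simp add: dist_commute)
          from \<delta>(2)[OF this] True show ?thesis by (simp add: dist_real_def)
        qed (use \<epsilon> in auto)
      qed
      also have "\<dots> = \<epsilon>/2 * measure lborel ?B" by simp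
      finally have "\<bar>pr ?B - f \<xi> * measure lborel ?B\<bar> \<le> \<epsilon>/2 * measure lborel ?B" .
      moreover have "pr ?B / measure lborel ?B - f \<xi> = (pr ?B - f \<xi> * measure lborel ?B) / measure lborel ?B"
        using cpos[of n] by (simp add: diff_divide_distrib)
      ultimately have "\<bar>pr ?B / measure lborel ?B - f \<xi>\<bar> \<le> \<epsilon>/2"
        using cpos[of n] by (simp add: abs_divide divide_le_eq)
      thus "norm (pr ?B / measure lborel ?B - f \<xi>) < \<epsilon>" using \<epsilon> by simp
    qed
  qed
qed

theorem mainTheorem10:
  fixes T0 :: real and P :: "('d::finite) set" and B :: "real^'d^'d" and D :: "(real^'d) set"
    and M :: "'w measure" and Fl :: "real \<Rightarrow> real \<Rightarrow> 'w measure"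
    and Pm :: "real \<Rightarrow> real^'d \<Rightarrow> 'w measure" and X :: "real \<Rightarrow> 'w \<Rightarrow> real^'d"
    and a :: "'d \<Rightarrow> 'd \<Rightarrow> ('d::finite) st \<Rightarrow> real" and b :: "'d \<Rightarrow> ('d::finite) st \<Rightarrow> real"
    and N :: nat and \<alpha> Mc :: real
    and \<Gamma> :: "real \<Rightarrow> real^'d \<Rightarrow> real \<Rightarrow> real^'d \<Rightarrow> real"
  assumes T0: "0 < T0"
    and P: "P \<noteq> {}"
    and D: "open D" "connected D"
    and H: "hoermander_H P B"
    and R: "assumption_R T0 P B D a b N \<alpha> Mc"
    and F: "assumption_F T0 Pm X D"
    and markov: "cont_strong_markov T0 M Fl Pm X"
    and diff: "local_diffusion T0 Pm X P B D a b"
    and dens: "local_density T0 Pm X D \<Gamma>"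
    and t: "0 < t" "t < T" "T < T0"
    and \<xi>: "\<xi> \<in> D"
  shows "bounded (range (\<lambda>x. \<Gamma> t x T \<xi>)) \<and>
         (\<lambda>x. \<Gamma> t x T \<xi>) \<in> borel_measurable borel \<and>
         (\<forall>s x. t < s \<and> s < T \<longrightarrow> \<Gamma> t x T \<xi> = (\<integral>\<omega>. \<Gamma> s (X s \<omega>) T \<xi> \<partial>(Pm t x)))"
proof -
  obtain e where e: "0 < e" "cball \<xi> e \<subseteq> D"
    using D(1) \<xi> by (meson open_contains_cball)
  define A where "A n = ball \<xi> (e / Suc n)" for n :: nat
  define g where "g t' n z = trans_prob Pm X t' z T (A n) / measure lborel (A n)" for t' n z
  note mk = markov[unfolded cont_strong_markov_def]
  note pm = conjunct1[OF mk]
  note pm = pm[rule_format]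
  note sub = conjunct1[OF conjunct2[OF mk]]
  note sub = sub[rule_format]
  note Xm = conjunct1[OF conjunct2[OF conjunct2[OF conjunct2[OF mk]]]]
  note Xm = Xm[rule_format]
  note tpm = conjunct1[OF conjunct2[OF conjunct2[OF conjunct2[OF conjunct2[OF conjunct2[OF conjunct2[OF mk]]]]]]]
  note tpm = tpm[rule_format]
  note sm = conjunct2[OF conjunct2[OF conjunct2[OF conjunct2[OF conjunct2[OF conjunct2[OF conjunct2[OF mk]]]]]]]
  note sm = sm[rule_format]
  have gen: "\<exists>C. (\<forall>x. (\<lambda>n. g t' n x) \<longlonglongrightarrow> \<Gamma> t' x T \<xi>) \<and> (\<forall>n x. 0 \<le> g t' n x \<and> g t' n x \<le> C)
      \<and> (\<forall>x. 0 \<le> \<Gamma> t' x T \<xi> \<and> \<Gamma> t' x T \<xi> \<le> C) \<and> (\<forall>n. g t' n \<in> borel_measurable borel)"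
    if t': "0 < t'" "t' < T" for t'
  proof -
    note dd = mp[OF mp[OF mp[OF spec[OF spec[OF dens[unfolded local_density_def], of t'], of T] t'(1)] t'(2)] t(3)]
    note d1 = conjunct1[OF dd]
    note d2 = conjunct1[OF conjunct2[OF dd]]
    note d3 = conjunct1[OF conjunct2[OF conjunct2[OF dd]]]
    note d4 = conjunct1[OF conjunct2[OF conjunct2[OF conjunct2[OF dd]]]]
    note d5 = conjunct2[OF conjunct2[OF conjunct2[OF conjunct2[OF dd]]]]
    obtain C where C: "\<forall>x. \<forall>y\<in>cball \<xi> e. \<Gamma> t' x T y \<le> C"
      using d5[rule_format, OF compact_cball e(2)] by blast
    have prn: "\<forall>A'. 0 \<le> trans_prob Pm X t' x T A'" for x unfolding trans_prob_def by simp
    have nnx: "\<forall>y\<in>D. 0 \<le> \<Gamma> t' x T y" for x using d1 by blast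
    have Cx: "\<forall>y\<in>cball \<xi> e. \<Gamma> t' x T y \<le> C" for x using C by blast
    have L1: "(\<lambda>n. g t' n x) \<longlonglongrightarrow> \<Gamma> t' x T \<xi>" for x
      unfolding g_def A_def by (rule dens_lim(1)[OF D(1) \<xi> spec[OF d4, of x] spec[OF d2, of x] nnx[of x] spec[OF d3, of x] prn[of x] e(1) e(2) Cx[of x]])
    have L2: "0 \<le> g t' n x" for x n
      unfolding g_def A_def by (rule dens_lim(2)[OF D(1) \<xi> spec[OF d4, of x] spec[OF d2, of x] nnx[of x] spec[OF d3, of x] prn[of x] e(1) e(2) Cx[of x]])
    have L3: "g t' n x \<le> C" for x n
      unfolding g_def A_def by (rule dens_lim(3)[OF D(1) \<xi> spec[OF d4, of x] spec[OF d2, of x] nnx[of x] spec[OF d3, of x] prn[of x] e(1) e(2) Cx[of x]])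
    have G: "\<Gamma> t' x T \<xi> \<le> C" "0 \<le> \<Gamma> t' x T \<xi>" for x
      using Cx[of x] nnx[of x] e(1) \<xi> by auto
    have Mg: "g t' n \<in> borel_measurable borel" for n
    proof -
      have "(\<lambda>z. trans_prob Pm X t' z T (A n)) \<in> borel_measurable borel"
        by (rule tpm) (use t' t T0 in \<open>auto simp: A_def\<close>)
      then show ?thesis unfolding g_def by measurable
    qed
    show ?thesis using L1 L2 L3 G Mg by blast
  qed
  obtain Ct where Ct: "\<forall>x. (\<lambda>n. g t n x) \<longlonglongrightarrow> \<Gamma> t x T \<xi>" "\<forall>n x. 0 \<le> g t n x \<and> g t n x \<le> Ct"
    "\<forall>x. 0 \<le> \<Gamma> t x T \<xi> \<and> \<Gamma> t x T \<xi> \<le> Ct" "\<forall>n. g t n \<in> borel_measurable borel"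
    using gen[OF t(1,2)] by blast
  have b1: "bounded (range (\<lambda>x. \<Gamma> t x T \<xi>))"
    unfolding bounded_iff using Ct(3) by (intro exI[of _ Ct]) auto
  have b2: "(\<lambda>x. \<Gamma> t x T \<xi>) \<in> borel_measurable borel"
    by (rule borel_measurable_LIMSEQ_real[where u="g t"]) (use Ct in auto)
  have b3: "\<Gamma> t x T \<xi> = (\<integral>\<omega>. \<Gamma> s (X s \<omega>) T \<xi> \<partial>(Pm t x))" if s: "t < s" "s < T" for s x
  proof -
    obtain Cs where Cs: "\<forall>x. (\<lambda>n. g s n x) \<longlonglongrightarrow> \<Gamma> s x T \<xi>" "\<forall>n x. 0 \<le> g s n x \<and> g s n x \<le> Cs"
      "\<forall>x. 0 \<le> \<Gamma> s x T \<xi> \<and> \<Gamma> s x T \<xi> \<le> Cs" "\<forall>n. g s n \<in> borel_measurable borel"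
      using gen[of s] s t(1) by (meson less_trans)
    have gsm: "(\<lambda>x. \<Gamma> s x T \<xi>) \<in> borel_measurable borel"
      by (rule borel_measurable_LIMSEQ_real[where u="g s"]) (use Cs in auto)
    have t0: "t \<in> {0..<T0}" using t by auto
    have ps: "prob_space (Pm t x)" and se: "sets (Pm t x) = sets M" using pm[OF t0, of x] by blast+
    have sp: "space (Pm t x) = space M" using se by (rule sets_eq_imp_space_eq)
    have subs: "subalgebra M (Fl t s)" by (rule sub) (use s t in linarith)+
    have Xsm0: "X s \<in> borel_measurable M"
      by (rule measurable_from_subalg[OF subs], rule Xm) (use s t in linarith)+
    have Xsm: "X s \<in> borel_measurable (Pm t x)"
      using Xsm0 measurable_cong_sets[OF se refl] by blast
    have spr: "space (Fl t r) = space M" if r: "t \<le> r" "r < T0" for r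
    proof -
      have "subalgebra M (Fl t r)" by (rule sub) (use r t in linarith)+
      then show ?thesis unfolding subalgebra_def by blast
    qed
    have setsr: "\<And>r. t \<le> r \<Longrightarrow> r < T0 \<Longrightarrow> {\<omega> \<in> space M. s \<le> r} \<in> sets (Fl t r)"
    proof -
      fix r assume r: "t \<le> r" "r < T0"
      show "{\<omega> \<in> space M. s \<le> r} \<in> sets (Fl t r)"
      proof (cases "s \<le> r")
        case True then show ?thesis using spr[OF r] sets.top[of "Fl t r"] by simp
      qed simp
    qed
    have st: "is_stopping_time T0 M Fl t (\<lambda>_. s)"
      unfolding is_stopping_time_def
    proof (intro conjI ballI)
      fix r assume "r \<in> {t..<T0}"
      then show "{\<omega> \<in> space M. s \<le> r} \<in> sets (Fl t r)" by (intro setsr) auto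
    qed (use s t in auto)
    have ss: "space M \<in> stopped_sets T0 M Fl t (\<lambda>_. s)"
      unfolding stopped_sets_def
    proof (intro CollectI conjI ballI)
      show "space M \<in> sets M" by (rule sets.top)
      fix r assume "r \<in> {t..<T0}"
      then have "{\<omega> \<in> space M. s \<le> r} \<in> sets (Fl t r)" by (intro setsr) auto
      moreover have "space M \<inter> {\<omega> \<in> space M. s \<le> r} = {\<omega> \<in> space M. s \<le> r}" by blast
      ultimately show "space M \<inter> {\<omega> \<in> space M. s \<le> r} \<in> sets (Fl t r)" by (simp only:)
    qed
    have ck: "trans_prob Pm X t x T (A n) = (\<integral>\<omega>. trans_prob Pm X s (X s \<omega>) T (A n) \<partial>(Pm t x))" for n
    proof -
      have "measure (Pm t x) (space M \<inter> {\<omega> \<in> space M. s \<le> T \<and> X T \<omega> \<in> A n}) =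
          (\<integral>\<omega>\<in>space M \<inter> {\<omega> \<in> space M. s \<le> T}. trans_prob Pm X s (X s \<omega>) T (A n) \<partial>(Pm t x))"
      proof (rule sm[OF t0 st _ _ ss])
        show "T \<in> {t..<T0}" using t by auto
        show "A n \<in> sets borel" unfolding A_def by simp
      qed
      moreover have "space M \<inter> {\<omega> \<in> space M. s \<le> T \<and> X T \<omega> \<in> A n} = {\<omega> \<in> space (Pm t x). X T \<omega> \<in> A n}"
        using less_imp_le[OF s(2)] unfolding sp by blast
      moreover have "(\<integral>\<omega>\<in>space M \<inter> {\<omega> \<in> space M. s \<le> T}. trans_prob Pm X s (X s \<omega>) T (A n) \<partial>(Pm t x))
          = (\<integral>\<omega>. trans_prob Pm X s (X s \<omega>) T (A n) \<partial>(Pm t x))"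
        unfolding set_lebesgue_integral_def using s sp
        by (intro Bochner_Integration.integral_cong) (auto simp: indicator_def)
      ultimately show ?thesis unfolding trans_prob_def by (simp only:)
    qed
    have eqn: "g t n x = (\<integral>\<omega>. g s n (X s \<omega>) \<partial>(Pm t x))" for n
      unfolding g_def ck by simp
    have "(\<lambda>n. \<integral>\<omega>. g s n (X s \<omega>) \<partial>(Pm t x)) \<longlonglongrightarrow> (\<integral>\<omega>. \<Gamma> s (X s \<omega>) T \<xi> \<partial>(Pm t x))"
    proof (rule integral_dominated_convergence[where w="\<lambda>_. Cs"])
      show "(\<lambda>\<omega>. \<Gamma> s (X s \<omega>) T \<xi>) \<in> borel_measurable (Pm t x)"
        using measurable_compose[OF Xsm gsm] by simp
      show "(\<lambda>\<omega>. g s n (X s \<omega>)) \<in> borel_measurable (Pm t x)" for n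
        using measurable_compose[OF Xsm] Cs(4) by auto
      show "integrable (Pm t x) (\<lambda>_. Cs)"
        using ps by (simp add: prob_space.finite_measure finite_measure.integrable_const)
      show "AE \<omega> in Pm t x. (\<lambda>n. g s n (X s \<omega>)) \<longlonglongrightarrow> \<Gamma> s (X s \<omega>) T \<xi>"
        using Cs(1) by auto
      show "AE \<omega> in Pm t x. norm (g s n (X s \<omega>)) \<le> Cs" for n
        using Cs(2) by auto
    qed
    then have "(\<lambda>n. g t n x) \<longlonglongrightarrow> (\<integral>\<omega>. \<Gamma> s (X s \<omega>) T \<xi> \<partial>(Pm t x))"
      unfolding eqn .
    then show ?thesis using Ct(1) LIMSEQ_unique by blast
  qed
  show ?thesis using b1 b2 b3 by blast
qed

end
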